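(* Let $q$ be a prime power with $q\equiv2\pmod 3$, let $m,n$ be positive integers, let $\omega\in\mathbb{F}_{q^2}$ be an element of multiplicative order $3$, and let $\varepsilon\in\mathbb{F}_q^*\cup\{\pm\omega,\pm\omega^2\}$. Put $f(x)=(x+x^q)^m+\varepsilon(x+\omega x^q)^n$. Then: (i) if $\varepsilon\in\mathbb{F}_q^*$, $f$ permutes $\mathbb{F}_{q^2}$ if and only if $\gcd(mn,q-1)=1$ and $3\nmid n$; (ii) if $\varepsilon=\pm\omega$, $f$ permutes $\mathbb{F}_{q^2}$ if and only if $\gcd(mn,q-1)=1$ and $n\not\equiv1\pmod3$; (iii) if $\varepsilon=\pm\omega^2$, $f$ permutes $\mathbb{F}_{q^2}$ if and only if $\gcd(mn,q-1)=1$ and $n\not\equiv2\pmod3$.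
   Context: $f$ permutes $\mathbb{F}_{q^2}$ means the map $x\mapsto f(x)$ on $\mathbb{F}_{q^2}$ is bijective. *)

theory Defs
  imports "HOL-Computational_Algebra.Primes"
begin

definition subfield_Fq :: "nat \<Rightarrow> 'a::field set" where
  "subfield_Fq q = {x. x ^ q = x}"

end

theory Submission
  imports Defs "HOL-Number_Theory.Residues" "HOL-Computational_Algebra.Polynomial"
begin

lemma pow_card_same:
  fixes x :: "'a::{field,finite}"
  shows "x ^ card (UNIV :: 'a set) = x"
proof (cases "x = 0")
  case False
  have "x * (\<Prod>y\<in>UNIV-{0}. x * y) = x * x ^ (card (UNIV :: 'a set) - 1) * \<Prod>(UNIV-{0})"
    by (simp add: prod.distrib mult_ac)
  also have "x * x ^ (card (UNIV :: 'a set) - 1) = x ^ Suc (card (UNIV :: 'a set) - 1)"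
    by (subst power_Suc) auto
  also have "Suc (card (UNIV :: 'a set) - 1) = card (UNIV :: 'a set)"
    using finite_UNIV_card_ge_0[where ?'a = 'a] by simp
  also have "(\<Prod>y\<in>UNIV-{0}. x * y) = (\<Prod>y\<in>UNIV-{0}. y)"
    by (rule prod.reindex_bij_witness[of _ "\<lambda>y. y / x" "\<lambda>y. x * y"]) (use False in auto)
  finally show ?thesis
    by simp
qed (use finite_UNIV_card_ge_0[where ?'a = 'a] in auto)

lemma roots_unity_card:
  fixes k :: nat assumes "k > 0"
  shows "finite {x::'a::field. x ^ k = 1} \<and> card {x::'a::field. x ^ k = 1} \<le> k"
proof -
  define P :: "'a poly" where "P = [:-1:] + monom 1 k"
  have deg: "degree P = k"
    unfolding P_def using assms by (subst degree_add_eq_right) (auto simp: degree_monom_eq)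
  have P0: "P \<noteq> 0" using deg assms by auto
  have eq: "{x. x^k = 1} = {x. poly P x = 0}" by (auto simp add: P_def poly_monom)
  show ?thesis unfolding eq using card_poly_roots_bound[OF P0] poly_roots_finite[OF P0] deg by simp
qed

lemma power_inj_iff:
  fixes F :: "'a::field set" and q e :: nat
  assumes F_def: "F = {x. x ^ q = x}" and cardF: "card F = q" and q2: "q \<ge> 2" and e: "e > 0"
  shows "inj_on (\<lambda>t. t ^ e) F \<longleftrightarrow> coprime e (q - 1)"
proof
  have unit: "t ^ (q-1) = 1" if "t \<in> F" "t \<noteq> 0" for t
  proof -
    have "Suc (q - 1) = q" using q2 by simp
    have tq: "t^q = t" using that F_def by simp
    have "t * t^(q-1) = t ^ Suc (q-1)" by simp
    also have "\<dots> = t * 1" using \<open>Suc (q - 1) = q\<close> tq by simp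
    finally have "t * t^(q-1) = t * 1" .
    then show ?thesis using that by simp
  qed
  show "coprime e (q-1)" if inj: "inj_on (\<lambda>t. t ^ e) F"
  proof (rule ccontr)
    assume nc: "\<not> coprime e (q-1)"
    define d where "d = gcd e (q-1)"
    have "d \<noteq> 1" using nc by (simp add: d_def coprime_iff_gcd_eq_1)
    have d0: "d > 0" using e d_def by simp
    hence d2: "d \<ge> 2" using \<open>d\<noteq>1\<close> by linarith
    have dq: "d dvd q - 1" "d dvd e" by (simp_all add: d_def)
    define k where "k = (q-1) div d"
    have qk: "q - 1 = d * k" using dq k_def by simp
    have k0: "k > 0"
    proof (rule ccontr)
      assume "\<not> k > 0" hence "k = 0" by simp
      with qk q2 show False by simp
    qed
    have "1 * k < d * k" using d2 k0 by (intro mult_strict_right_mono) auto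
    hence kl: "k < q - 1" using qk by simp
    obtain e' where e': "e = d * e'" using dq by (auto elim: dvdE)
    have injd: "inj_on (\<lambda>t. t ^ d) F"
    proof (rule inj_onI)
      fix x y assume "x \<in> F" "y \<in> F" "x ^ d = y ^ d"
      then have "x ^ e = y ^ e" by (simp add: e' power_mult)
      then show "x = y" using inj \<open>x \<in> F\<close> \<open>y \<in> F\<close> by (auto dest: inj_onD)
    qed
    have sub: "(\<lambda>t. t^d) ` (F - {0}) \<subseteq> {y. y ^ k = 1}"
    proof (rule image_subsetI)
      fix t assume t: "t \<in> F - {0}"
      have "(t^d)^k = t^(q-1)" by (simp only: qk power_mult)
      then show "t^d \<in> {y. y ^ k = 1}" using unit t by simp
    qed
    have fR: "finite {y::'a. y^k = 1}" using roots_unity_card[OF k0] by blast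
    have finF: "finite F" using cardF q2 card_ge_0_finite by force
    have zF: "0 \<in> F" using F_def q2 by simp
    have "q - 1 = card (F - {0})" using cardF finF zF by simp
    also have "\<dots> = card ((\<lambda>t. t^d) ` (F - {0}))" by (rule card_image[symmetric], rule inj_on_subset[OF injd]) auto
    also have "\<dots> \<le> card ({y. y ^ k = 1} :: 'a set)" by (rule card_mono[OF fR sub])
    also have "\<dots> \<le> k" using roots_unity_card[OF k0, where 'a='a] by auto
    finally show False using kl by simp
  qed
  show "inj_on (\<lambda>t. t ^ e) F" if cop: "coprime e (q-1)"
  proof -
    obtain u v where uv: "e * u = (q-1) * v + gcd e (q-1)" using bezout_nat[of e "q-1"] e by auto
    with cop have uv: "e*u = (q-1)*v + 1" by simp
    have bk: "(t^e)^u = t" if "t \<in> F" for t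
    proof (cases "t = 0")
      case True
      have "u \<noteq> 0" using uv by (metis add_is_0 mult_0_right zero_neq_one)
      then show ?thesis using True e by (simp add: power_0_left)
    next
      case False
      have "(t^e)^u = (t^(q-1))^v * t" by (simp add: uv flip: power_mult)
      then show ?thesis using unit[OF that False] by simp
    qed
    show ?thesis by (rule inj_onI) (metis bk)
  qed
qed


theorem proposition3p4:
  fixes q m n :: nat and \<omega> \<epsilon> :: "'a::{field,finite}"
  assumes q_pp: "\<exists>p k. prime p \<and> k > 0 \<and> q = p ^ k"
    and q_mod: "q mod 3 = 2"
    and card: "card (UNIV :: 'a set) = q ^ 2"
    and m_pos: "m > 0" and n_pos: "n > 0"
    and \<omega>_ord: "\<omega> ^ 3 = 1" "\<omega> \<noteq> 1"
    and \<epsilon>_cases: "\<epsilon> \<in> (subfield_Fq q - {0}) \<union> {\<omega>, -\<omega>, \<omega>^2, -(\<omega>^2)}"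
  defines "f \<equiv> (\<lambda>x::'a. (x + x ^ q) ^ m + \<epsilon> * (x + \<omega> * x ^ q) ^ n)"
  shows "(\<epsilon> \<in> subfield_Fq q - {0} \<longrightarrow>
            (bij f \<longleftrightarrow> coprime (m * n) (q - 1) \<and> \<not> 3 dvd n))
       \<and> ((\<epsilon> = \<omega> \<or> \<epsilon> = -\<omega>) \<longrightarrow>
            (bij f \<longleftrightarrow> coprime (m * n) (q - 1) \<and> n mod 3 \<noteq> 1))
       \<and> ((\<epsilon> = \<omega>^2 \<or> \<epsilon> = -(\<omega>^2)) \<longrightarrow>
            (bij f \<longleftrightarrow> coprime (m * n) (q - 1) \<and> n mod 3 \<noteq> 2))"
proof -
  obtain p k where pk: "prime p" "k > 0" "q = p ^ k" using q_pp by blast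
  have q2: "q \<ge> 2" using q_mod by presburger
  have fin: "finite (UNIV :: 'a set)" by simp
  have charpos: "CHAR('a) > 0" using finite_imp_CHAR_pos[OF fin] .
  have charprime: "prime CHAR('a)" using prime_CHAR_semidom[OF charpos] .
  have "CHAR('a) dvd p ^ (k * 2)" using CHAR_dvd_CARD[where 'a='a] card pk by (simp add: power_mult)
  hence "CHAR('a) dvd p" using prime_dvd_power charprime by blast
  hence charp: "CHAR('a) = p" using primes_dvd_imp_eq charprime pk(1) by blast
  have frob_add: "(x + y) ^ q = x ^ q + y ^ q" for x y :: 'a
    using freshmans_dream'[OF charprime, of q k] charp pk by simp
  have frob_neg: "(-x) ^ q = -(x ^ q)" for x :: 'a
  proof -
    have "(x + -x) ^ q = x ^ q + (-x) ^ q" by (rule frob_add)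
    then have "x ^ q + (-x) ^ q = 0" using q2 by (simp add: zero_power)
    then show ?thesis by (simp add: eq_neg_iff_add_eq_0 add.commute)
  qed
  have frob_diff: "(x - y) ^ q = x ^ q - y ^ q" for x y :: 'a
    using frob_add[of x "-y"] frob_neg[of y] by simp
  have invol: "(x ^ q) ^ q = x" for x :: 'a
    using pow_card_same[of x] card by (simp add: power2_eq_square power_mult)
  have pc: "(x ^ j) ^ q = (x ^ q) ^ j" for x :: 'a and j
    by (simp add: power_mult[symmetric] mult.commute)
  define F where "F = (subfield_Fq q :: 'a set)"
  have F_mem: "x \<in> F \<longleftrightarrow> x ^ q = x" for x by (simp add: F_def subfield_Fq_def)
  have w0: "\<omega> \<noteq> 0" using \<omega>_ord by auto
  have wq: "\<omega> ^ q = \<omega> ^ 2"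
  proof -
    have "q = 3 * (q div 3) + 2" using q_mod by presburger
    then have "\<omega> ^ q = (\<omega> ^ 3) ^ (q div 3) * \<omega> ^ 2" by (metis power_add power_mult)
    then show ?thesis using \<omega>_ord by simp
  qed
  have w1: "\<omega> ^ j = 1 \<longleftrightarrow> 3 dvd j" for j
  proof -
    have "\<omega> ^ j = \<omega> ^ (3 * (j div 3) + j mod 3)" by simp
    also have "\<dots> = (\<omega> ^ 3) ^ (j div 3) * \<omega> ^ (j mod 3)" by (simp only: power_add power_mult)
    finally have "\<omega> ^ j = (\<omega> ^ 3) ^ (j div 3) * \<omega> ^ (j mod 3)" .
    then have eq: "\<omega> ^ j = \<omega> ^ (j mod 3)" using \<omega>_ord by simp
    have w2: "\<omega> ^ 2 \<noteq> 1"
    proof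
      assume "\<omega> ^ 2 = 1"
      then have "\<omega> ^ 3 = \<omega>" by (simp add: power3_eq_cube power2_eq_square)
      then show False using \<omega>_ord by simp
    qed
    have "j mod 3 = 0 \<or> j mod 3 = 1 \<or> j mod 3 = 2" by presburger
    then show ?thesis
    proof (elim disjE)
      assume h: "j mod 3 = 0" then show ?thesis using eq by (simp add: dvd_eq_mod_eq_0)
    next
      assume h: "j mod 3 = 1" then show ?thesis using eq \<omega>_ord(2) by (simp add: dvd_eq_mod_eq_0)
    next
      assume h: "j mod 3 = 2" then show ?thesis using eq w2 by (simp add: dvd_eq_mod_eq_0)
    qed
  qed
  have wF: "\<omega> ^ j \<in> F \<longleftrightarrow> 3 dvd j" for j
  proof -
    have "(\<omega> ^ j) ^ q = (\<omega> ^ 2) ^ j" by (simp add: pc wq)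
    also have "\<dots> = (\<omega> ^ j) ^ 2" by (simp add: power_mult[symmetric] mult.commute)
    finally have "(\<omega> ^ j) ^ q = \<omega> ^ j * \<omega> ^ j" by (simp add: power2_eq_square)
    then have "\<omega> ^ j \<in> F \<longleftrightarrow> \<omega> ^ j * \<omega> ^ j = \<omega> ^ j * 1" by (simp add: F_mem)
    also have "\<dots> \<longleftrightarrow> \<omega> ^ j = 1" using w0 by (simp del: mult_1_right)
    finally show ?thesis using w1 by simp
  qed
  have wnF: "\<omega> \<notin> F" using wF[of 1] by simp
  have F_add: "x \<in> F \<Longrightarrow> y \<in> F \<Longrightarrow> x + y \<in> F" for x y by (simp add: F_mem frob_add)
  have F_mult: "x \<in> F \<Longrightarrow> y \<in> F \<Longrightarrow> x * y \<in> F" for x y by (simp add: F_mem power_mult_distrib)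
  have F_pow: "x \<in> F \<Longrightarrow> x ^ j \<in> F" for x j
    by (simp add: F_mem pc)
  have F_0: "0 \<in> F" using q2 by (simp add: F_mem)
  define U where "U = (\<lambda>x::'a. x + x ^ q)"
  define V where "V = (\<lambda>x::'a. -\<omega> * (x + \<omega> * x ^ q))"
  have w4: "\<omega> ^ 2 * \<omega> ^ 2 = \<omega>"
  proof -
    have "\<omega> ^ 2 * \<omega> ^ 2 = \<omega> ^ 3 * \<omega>" by (simp add: power2_eq_square power3_eq_cube)
    then show ?thesis using \<omega>_ord by simp
  qed
  have UF: "U x \<in> F" for x by (simp add: U_def F_mem frob_add invol add.commute)
  have VF: "V x \<in> F" for x
  proof -
    have "(V x) ^ q = -(\<omega>^2) * (x ^ q + \<omega>^2 * x)"
      by (simp add: V_def power_mult_distrib frob_add frob_neg wq invol)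
    also have "\<dots> = -(\<omega>^2) * x ^ q - (\<omega>^2 * \<omega>^2) * x" by (simp add: algebra_simps)
    also have "\<dots> = V x" unfolding w4 by (simp add: V_def algebra_simps power2_eq_square)
    finally show ?thesis by (simp add: F_mem)
  qed
  have Phi_inj: "inj (\<lambda>x. (U x, V x))"
  proof (rule injI)
    fix x y assume "(U x, V x) = (U y, V y)"
    then have eu: "U x = U y" and ev: "V x = V y" by auto
    define z where "z = x - y"
    have uz: "z + z ^ q = 0" using eu by (simp add: U_def z_def frob_diff algebra_simps)
    have "-\<omega> * (z + \<omega> * z ^ q) = 0" using ev by (simp add: V_def z_def frob_diff algebra_simps)
    then have vz: "z + \<omega> * z ^ q = 0" using w0 by simp
    have "(1 - \<omega>) * z ^ q = (z + z ^ q) - (z + \<omega> * z ^ q)" by (simp add: algebra_simps)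
    then have "(1 - \<omega>) * z ^ q = 0" using uz vz by simp
    then have "z ^ q = 0" using \<omega>_ord(2) by simp
    then have "z = 0" by simp
    then show "x = y" by (simp add: z_def)
  qed
  have finF: "finite F" by simp
  have cardF_le: "card F \<le> q"
  proof -
    have "F \<subseteq> insert 0 {x. x ^ (q - 1) = 1}"
    proof
      fix x assume "x \<in> F"
      then have tq: "x ^ q = x" by (simp add: F_mem)
      show "x \<in> insert 0 {x. x ^ (q - 1) = 1}"
      proof (cases "x = 0")
        case False
        have "Suc (q - 1) = q" using q2 by simp
        then have "x * x ^ (q - 1) = x * 1" using tq by (metis power_Suc mult_1_right)
        then show ?thesis using False by simp
      qed simp
    qed
    then have "card F \<le> card (insert 0 {x::'a. x ^ (q - 1) = 1})" by (intro card_mono) auto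
    also have "\<dots> \<le> Suc (card {x::'a. x ^ (q - 1) = 1})" by (simp add: card_insert_if)
    also have "\<dots> \<le> Suc (q - 1)" using roots_unity_card[of "q - 1", where 'a='a] q2 by simp
    also have "\<dots> = q" using q2 by simp
    finally show ?thesis .
  qed
  have "q * q \<le> card F * card F"
  proof -
    have "q * q = card (UNIV :: 'a set)" using card by (simp add: power2_eq_square)
    also have "\<dots> \<le> card (F \<times> F)"
      by (rule card_inj_on_le[OF Phi_inj]) (auto simp: UF VF)
    finally show ?thesis by (simp add: card_cartesian_product)
  qed
  then have cardF: "card F = q"
  proof -
    assume qq: "q * q \<le> card F * card F"
    show ?thesis
    proof (rule ccontr)
      assume "card F \<noteq> q"
      then have lt: "card F < q" using cardF_le by simp
      have "card F * card F < q * q" using lt by (intro mult_strict_mono) auto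
      then show False using qq by simp
    qed
  qed
  have Phi_bij: "bij_betw (\<lambda>x. (U x, V x)) UNIV (F \<times> F)"
  proof -
    have sub: "range (\<lambda>x. (U x, V x)) \<subseteq> F \<times> F" using UF VF by auto
    have "card (range (\<lambda>x. (U x, V x))) = card (F \<times> F)"
      using card_image[OF Phi_inj] card cardF by (simp add: card_cartesian_product power2_eq_square)
    then have "range (\<lambda>x. (U x, V x)) = F \<times> F" using sub by (intro card_subset_eq) auto
    then show ?thesis using Phi_inj by (simp add: bij_betw_def)
  qed
  define c where "c = \<epsilon> * (-(\<omega>^2)) ^ n"
  define g where "g = (\<lambda>(s::'a, t::'a). s ^ m + c * t ^ n)"
  have f_eq: "f = g \<circ> (\<lambda>x. (U x, V x))"
  proof
    fix x
    have "-(\<omega>^2) * V x = \<omega> ^ 3 * (x + \<omega> * x ^ q)"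
      by (simp add: V_def power2_eq_square power3_eq_cube)
    then have "x + \<omega> * x ^ q = -(\<omega>^2) * V x" using \<omega>_ord by simp
    then have "(x + \<omega> * x ^ q) ^ n = (-(\<omega>^2)) ^ n * (V x) ^ n"
      by (simp only: power_mult_distrib)
    then show "f x = (g \<circ> (\<lambda>x. (U x, V x))) x"
      by (simp add: f_def g_def U_def c_def mult.assoc)
  qed
  have bij_f: "bij f \<longleftrightarrow> bij_betw g (F \<times> F) UNIV"
    using bij_betw_comp_iff[OF Phi_bij, of g UNIV] f_eq by simp
  have g_iff: "bij_betw g (F \<times> F) UNIV \<longleftrightarrow>
      c \<notin> F \<and> inj_on (\<lambda>t. t ^ m) F \<and> inj_on (\<lambda>t. t ^ n) F"
  proof
    assume B: "bij_betw g (F \<times> F) UNIV"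
    then have inj: "inj_on g (F \<times> F)" and im: "g ` (F \<times> F) = UNIV" by (auto simp: bij_betw_def)
    show "c \<notin> F \<and> inj_on (\<lambda>t. t ^ m) F \<and> inj_on (\<lambda>t. t ^ n) F"
    proof (intro conjI)
      show "c \<notin> F"
      proof
        assume cF: "c \<in> F"
        have "g ` (F \<times> F) \<subseteq> F"
        proof
          fix y assume "y \<in> g ` (F \<times> F)"
          then obtain s t where st: "s \<in> F" "t \<in> F" "y = g (s, t)" by auto
          have "s ^ m \<in> F" "t ^ n \<in> F" using st F_pow by auto
          then have "s ^ m + c * t ^ n \<in> F" using cF F_add F_mult by blast
          then show "y \<in> F" using st by (simp add: g_def)
        qed
        then show False using im wnF by auto
      qed
      show "inj_on (\<lambda>t. t ^ m) F"
      proof (rule inj_onI)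
        fix s1 s2 assume "s1 \<in> F" "s2 \<in> F" "s1 ^ m = s2 ^ m"
        then have "g (s1, 0) = g (s2, 0)" using n_pos by (simp add: g_def)
        then show "s1 = s2" using inj_onD[OF inj] \<open>s1 \<in> F\<close> \<open>s2 \<in> F\<close> F_0 by blast
      qed
      show "inj_on (\<lambda>t. t ^ n) F"
      proof (rule inj_onI)
        fix s1 s2 assume "s1 \<in> F" "s2 \<in> F" "s1 ^ n = s2 ^ n"
        then have "g (0, s1) = g (0, s2)" using m_pos by (simp add: g_def)
        then show "s1 = s2" using inj_onD[OF inj] \<open>s1 \<in> F\<close> \<open>s2 \<in> F\<close> F_0 by blast
      qed
    qed
  next
    assume A: "c \<notin> F \<and> inj_on (\<lambda>t. t ^ m) F \<and> inj_on (\<lambda>t. t ^ n) F"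
    have cq: "c ^ q \<noteq> c" using A by (simp add: F_mem)
    have inj: "inj_on g (F \<times> F)"
    proof (rule inj_onI)
      fix a b assume a: "a \<in> F \<times> F" and b: "b \<in> F \<times> F" and e: "g a = g b"
      obtain s1 t1 where a': "a = (s1, t1)" by (cases a)
      obtain s2 t2 where b': "b = (s2, t2)" by (cases b)
      have F1: "s1 ^ q = s1" "t1 ^ q = t1" "s2 ^ q = s2" "t2 ^ q = t2"
        using a b a' b' by (auto simp: F_mem)
      have e1: "s1 ^ m + c * t1 ^ n = s2 ^ m + c * t2 ^ n" using e a' b' by (simp add: g_def)
      have "(s1 ^ m + c * t1 ^ n) ^ q = (s2 ^ m + c * t2 ^ n) ^ q" using e1 by simp
      moreover have h: "(s ^ m + c * t ^ n) ^ q = s ^ m + c ^ q * t ^ n" if "s ^ q = s" "t ^ q = t" for s t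
        using that by (simp add: frob_add power_mult_distrib pc)
      ultimately have e2: "s1 ^ m + c ^ q * t1 ^ n = s2 ^ m + c ^ q * t2 ^ n"
        using F1 by simp
      have "(c - c ^ q) * (t1 ^ n - t2 ^ n) = ((s1 ^ m + c * t1 ^ n) - (s1 ^ m + c ^ q * t1 ^ n))
          - ((s2 ^ m + c * t2 ^ n) - (s2 ^ m + c ^ q * t2 ^ n))" by (simp add: algebra_simps)
      then have "(c - c ^ q) * (t1 ^ n - t2 ^ n) = 0" using e1 e2 by simp
      then have "t1 ^ n = t2 ^ n" using cq by simp
      then have tt: "t1 = t2" using A a b a' b' by (auto dest: inj_onD)
      then have "s1 ^ m = s2 ^ m" using e1 by simp
      then have "s1 = s2" using A a b a' b' by (auto dest: inj_onD)
      then show "a = b" using tt a' b' by simp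
    qed
    have "card (g ` (F \<times> F)) = card (UNIV :: 'a set)"
      using card_image[OF inj] cardF card by (simp add: card_cartesian_product power2_eq_square)
    then have "g ` (F \<times> F) = UNIV" by (intro card_subset_eq) auto
    then show "bij_betw g (F \<times> F) UNIV" using inj by (simp add: bij_betw_def)
  qed
  have cop: "coprime (m * n) (q - 1) \<longleftrightarrow> inj_on (\<lambda>t. t ^ m) F \<and> inj_on (\<lambda>t. t ^ n) F"
    using power_inj_iff[OF _ cardF q2 m_pos] power_inj_iff[OF _ cardF q2 n_pos]
    by (simp add: F_def subfield_Fq_def)
  have main: "bij f \<longleftrightarrow> coprime (m * n) (q - 1) \<and> c \<notin> F"
    using bij_f g_iff cop by blast
  have negF: "-z \<in> F \<longleftrightarrow> z \<in> F" for z by (simp add: F_mem frob_neg)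
  have sgnF: "(-1) ^ j * z \<in> F \<longleftrightarrow> z \<in> F" for j z
    by (cases "even j") (simp_all add: negF)
  have cF: "c \<in> F \<longleftrightarrow> \<epsilon> * \<omega> ^ (2 * n) \<in> F"
  proof -
    have "(-(\<omega>^2)) ^ n = (-1) ^ n * (\<omega>^2) ^ n" by (rule power_minus)
    then have "c = (-1) ^ n * (\<epsilon> * \<omega> ^ (2 * n))"
      by (simp add: c_def power_mult mult.left_commute)
    then show ?thesis using sgnF by simp
  qed
  have c1: "\<epsilon> \<in> F - {0} \<Longrightarrow> (c \<in> F \<longleftrightarrow> 3 dvd n)"
  proof -
    assume eF: "\<epsilon> \<in> F - {0}"
    then have "\<epsilon> ^ q = \<epsilon>" "\<epsilon> \<noteq> 0" by (auto simp: F_mem)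
    then have "\<epsilon> * \<omega> ^ (2 * n) \<in> F \<longleftrightarrow> \<omega> ^ (2 * n) \<in> F"
      by (simp add: F_mem power_mult_distrib)
    moreover have "3 dvd (2 * n) \<longleftrightarrow> 3 dvd n" by presburger
    ultimately show ?thesis using cF wF[of "2*n"] by simp
  qed
  have c2: "\<epsilon> = \<omega> \<or> \<epsilon> = -\<omega> \<Longrightarrow> (c \<in> F \<longleftrightarrow> n mod 3 = 1)"
  proof -
    assume h: "\<epsilon> = \<omega> \<or> \<epsilon> = -\<omega>"
    have e1: "\<omega> * \<omega> ^ (2 * n) = \<omega> ^ (2 * n + 1)" by simp
    have e2: "-\<omega> * \<omega> ^ (2 * n) = -(\<omega> ^ (2 * n + 1))" by simp
    have "\<epsilon> * \<omega> ^ (2 * n) \<in> F \<longleftrightarrow> \<omega> ^ (2 * n + 1) \<in> F"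
      using h
    proof (elim disjE)
      assume he: "\<epsilon> = \<omega>"
      show ?thesis unfolding he by (simp only: e1)
    next
      assume he: "\<epsilon> = -(\<omega>)"
      show ?thesis unfolding he by (simp only: e2 negF)
    qed
    moreover have "3 dvd (2 * n + 1) \<longleftrightarrow> n mod 3 = 1" by presburger
    ultimately show ?thesis using cF wF[of "2*n+1"] by simp
  qed
  have c3: "\<epsilon> = \<omega>^2 \<or> \<epsilon> = -(\<omega>^2) \<Longrightarrow> (c \<in> F \<longleftrightarrow> n mod 3 = 2)"
  proof -
    assume h: "\<epsilon> = \<omega>^2 \<or> \<epsilon> = -(\<omega>^2)"
    have e1: "\<omega>^2 * \<omega> ^ (2 * n) = \<omega> ^ (2 * n + 2)" by (simp only: power_add mult.commute)
    have e2: "-(\<omega>^2) * \<omega> ^ (2 * n) = -(\<omega> ^ (2 * n + 2))" using e1 by simp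
    have "\<epsilon> * \<omega> ^ (2 * n) \<in> F \<longleftrightarrow> \<omega> ^ (2 * n + 2) \<in> F"
      using h
    proof (elim disjE)
      assume he: "\<epsilon> = \<omega>^2"
      show ?thesis unfolding he by (simp only: e1)
    next
      assume he: "\<epsilon> = -(\<omega>^2)"
      show ?thesis unfolding he by (simp only: e2 negF)
    qed
    moreover have "3 dvd (2 * n + 2) \<longleftrightarrow> n mod 3 = 2" by presburger
    ultimately show ?thesis using cF wF[of "2*n+2"] by simp
  qed
  show ?thesis using main c1 c2 c3 unfolding F_def by blast
qed

end
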